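(* Let $k\ge3$, let $G$ be a graph and $L$ a $k$-list assignment for $G$. Let $B$ be a bug in $G$ whose root $r$ has $d_G(r)=2$, and write $n=|V(G)|$. Then $B$ is safe in $G$ if at least one of the following holds: (i) there is no edge between $V(B)$ and $V(G)\setminus V(B)$; (ii) $3\le|V(B)|\le k$; (iii) $|V(B)|\ge5$; (iv) $|V(B)|=1$ and $n\not\equiv 0\pmod k$ and $n\not\equiv -1\pmod k$; (v) $|V(B)|=2$ and $n\not\equiv 0\pmod k$ and $n\not\equiv 1\pmod k$; (vi) $|V(B)|=4$, $k=3$ and $n\not\equiv0\pmod 3$.
   Context: $V_{3^+}(G)$ is the set of vertices of degree at least $3$ in $G$. A bug in $G$ is an induced connected subgraph $B$ together with a vertex $r\in V(B)$, its root, such that $V(B)\cap V_{3^+}(G)\subseteq\{r\}$. A $k$-list assignment $L$ assigns to each vertex $v$ a set $L(v)$ of exactly $k$ colors; an $L$-coloring is a proper vertex coloring $f$ with $f(v)\in L(v)$. For an integer $n$ and $k\ge1$, $n\bmod^* k$ is the unique $m\in\{1,\dots,k\}$ with $n\equiv m\pmod k$. If $|V(G)|=n\ge 1$, an $L$-coloring $f$ of $G$ is strongly equitable (SE) if every color class has at most $\lceil n/k\rceil$ vertices and the number of colors whose class has exactly $\lceil n/k\rceil$ vertices (the full classes) is at most $n\bmod^* k$; the empty graph is regarded as SE $L$-colorable. A subgraph $S\subseteq G$ is safe in $G$ if every SE $L$-coloring of $G-V(S)$ (with the restriction of $L$) can be extended to an SE $L$-coloring of $G$. *)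

theory Defs
  imports Main
begin

definition graph :: "'a set \<Rightarrow> ('a \<Rightarrow> 'a \<Rightarrow> bool) \<Rightarrow> bool" where
  "graph V E \<longleftrightarrow> finite V \<and>
     (\<forall>u v. E u v \<longrightarrow> u \<in> V \<and> v \<in> V \<and> u \<noteq> v \<and> E v u)"

definition degree :: "'a set \<Rightarrow> ('a \<Rightarrow> 'a \<Rightarrow> bool) \<Rightarrow> 'a \<Rightarrow> nat" where
  "degree V E v = card {u \<in> V. E v u}"

definition connected_induced :: "('a \<Rightarrow> 'a \<Rightarrow> bool) \<Rightarrow> 'a set \<Rightarrow> bool" where
  "connected_induced E S \<longleftrightarrow> S \<noteq> {} \<and>
     (\<forall>u\<in>S. \<forall>v\<in>S. (\<lambda>x y. x \<in> S \<and> y \<in> S \<and> E x y)\<^sup>*\<^sup>* u v)"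

definition bug :: "'a set \<Rightarrow> ('a \<Rightarrow> 'a \<Rightarrow> bool) \<Rightarrow> 'a set \<Rightarrow> 'a \<Rightarrow> bool" where
  "bug V E S r \<longleftrightarrow> S \<subseteq> V \<and> connected_induced E S \<and> r \<in> S \<and>
     {v \<in> S. degree V E v \<ge> 3} \<subseteq> {r}"

definition k_list_assignment :: "'a set \<Rightarrow> nat \<Rightarrow> ('a \<Rightarrow> 'c set) \<Rightarrow> bool" where
  "k_list_assignment V k L \<longleftrightarrow> (\<forall>v\<in>V. finite (L v) \<and> card (L v) = k)"

definition L_coloring :: "'a set \<Rightarrow> ('a \<Rightarrow> 'a \<Rightarrow> bool) \<Rightarrow> ('a \<Rightarrow> 'c set) \<Rightarrow> ('a \<Rightarrow> 'c) \<Rightarrow> bool" where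
  "L_coloring V E L f \<longleftrightarrow> (\<forall>v\<in>V. f v \<in> L v) \<and>
     (\<forall>u\<in>V. \<forall>v\<in>V. E u v \<longrightarrow> f u \<noteq> f v)"

definition modstar :: "nat \<Rightarrow> nat \<Rightarrow> nat" where
  "modstar n k = (if n mod k = 0 then k else n mod k)"

definition ceil_div :: "nat \<Rightarrow> nat \<Rightarrow> nat" where
  "ceil_div n k = (n + k - 1) div k"

definition SE_coloring :: "'a set \<Rightarrow> ('a \<Rightarrow> 'a \<Rightarrow> bool) \<Rightarrow> ('a \<Rightarrow> 'c set) \<Rightarrow> nat \<Rightarrow> ('a \<Rightarrow> 'c) \<Rightarrow> bool" where
  "SE_coloring V E L k f \<longleftrightarrow> L_coloring V E L f \<and>
     (V = {} \<or>
      ((\<forall>c. card {v \<in> V. f v = c} \<le> ceil_div (card V) k) \<and>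
       card {c. card {v \<in> V. f v = c} = ceil_div (card V) k} \<le> modstar (card V) k))"

definition safe :: "'a set \<Rightarrow> ('a \<Rightarrow> 'a \<Rightarrow> bool) \<Rightarrow> ('a \<Rightarrow> 'c set) \<Rightarrow> nat \<Rightarrow> 'a set \<Rightarrow> bool" where
  "safe V E L k S \<longleftrightarrow> (\<forall>f. SE_coloring (V - S) E L k f \<longrightarrow>
     (\<exists>g. SE_coloring V E L k g \<and> (\<forall>v \<in> V - S. g v = f v)))"

end

theory Submission
  imports Defs
begin

lemma safe_comp:
  assumes "safe (V - B) E L k A" "safe V E L k B"
  shows "safe V E L k (A \<union> B)"
  unfolding safe_def
proof (intro allI impI)
  fix f assume f: "SE_coloring (V - (A \<union> B)) E L k f"
  have "V - (A\<union>B) = (V - B) - A" by auto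
  then have "SE_coloring ((V - B) - A) E L k f" using f by simp
  then obtain g1 where g1: "SE_coloring (V - B) E L k g1" "\<forall>v\<in>(V-B)-A. g1 v = f v"
    using assms(1) unfolding safe_def by blast
  then obtain g2 where "SE_coloring V E L k g2" "\<forall>v\<in>V-B. g2 v = g1 v"
    using assms(2) unfolding safe_def by blast
  then show "\<exists>g. SE_coloring V E L k g \<and> (\<forall>v\<in>V - (A \<union> B). g v = f v)"
    using g1 by (intro exI[of _ g2]) auto
qed

lemma ceil_div_eq: assumes "1 \<le> r" "r \<le> k" shows "ceil_div (q*k + r) k = q + 1"
proof -
  have "q*k + r + k - 1 = (r + k - 1) + q*k" using assms by (simp add: algebra_simps)
  hence "ceil_div (q*k + r) k = q + (r + k - 1) div k" unfolding ceil_div_def using assms div_mult_self1[of k "r+k-1" q] by simp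
  moreover have "(r + k - 1) div k = 1"
    using assms by (intro div_nat_eqI) auto
  ultimately show ?thesis by simp
qed

lemma ceil_div_eq0: assumes "1 \<le> k" shows "ceil_div (q*k) k = q"
proof -
  have "q*k + k - 1 = (k - 1) + q*k" using assms by (simp add: algebra_simps)
  hence "ceil_div (q*k) k = q + (k - 1) div k" unfolding ceil_div_def using assms div_mult_self1[of k "k-1" q] by simp
  moreover have "(k - 1) div k = 0" using assms by simp
  ultimately show ?thesis by simp
qed

lemma modstar_eq: assumes "1 \<le> r" "r \<le> k" shows "modstar (q*k + r) k = r"
proof (cases "r = k")
  case True thus ?thesis unfolding modstar_def by simp
next
  case False
  hence "(q*k+r) mod k = r" using assms by simp
  thus ?thesis unfolding modstar_def using assms by simp
qed

definition secnt :: "nat \<Rightarrow> nat \<Rightarrow> ('c \<Rightarrow> nat) \<Rightarrow> bool" where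
 "secnt k N cnt \<longleftrightarrow> (\<forall>c. cnt c \<le> ceil_div N k) \<and> card {c. cnt c = ceil_div N k} \<le> modstar N k"

lemma count_core:
  fixes cf ch :: "'c \<Rightarrow> nat" and D :: "'c set"
  assumes k: "k \<ge> 1" and fin: "finite D" and t: "card D \<le> k"
   and ch: "\<And>c. ch c = cf c + (if c \<in> D then 1 else 0)"
   and sup: "finite {c. cf c \<noteq> 0}"
   and se: "(N = 0 \<and> (\<forall>c. cf c = 0)) \<or> (N > 0 \<and> secnt k N cf)"
   and cond: "N mod k = 0 \<or> card (D \<inter> {c. cf c = ceil_div N k}) = 0
        \<or> card (D \<inter> {c. cf c = ceil_div N k}) + k \<le> N mod k + card D"
   and pos: "N + card D > 0"
  shows "secnt k (N + card D) ch"
proof -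
  define t where "t = card D"
  show ?thesis
  proof (cases "N = 0")
    case True
    hence cf0: "\<And>c. cf c = 0" using se by auto
    have t1: "1 \<le> t" "t \<le> k" using pos True t t_def by auto
    have "ceil_div t k = 1" using ceil_div_eq[OF t1, of 0] by simp
    moreover have "modstar t k = t" using modstar_eq[OF t1, of 0] by simp
    moreover have "{c. ch c = 1} = D" using ch cf0 by auto
    ultimately show ?thesis unfolding secnt_def using True ch cf0 t_def by auto
  next
    case Np: False
    hence sN: "secnt k N cf" using se by auto
    define Q where "Q = N div k"
    define m where "m = N mod k"
    have Nqm: "N = Q*k + m" unfolding Q_def m_def by simp
    show ?thesis
    proof (cases "t = 0")
      case True
      hence "D = {}" using fin t_def by auto
      hence "ch = cf" using ch by auto
      thus ?thesis using sN True t_def by simp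
    next
      case tpos: False
      show ?thesis
      proof (cases "m = 0")
        case True
        hence NQ: "N = Q*k" using Nqm by simp
        have cq: "ceil_div N k = Q" using NQ ceil_div_eq0 k by simp
        hence cfle: "\<And>c. cf c \<le> Q" using sN unfolding secnt_def by auto
        have t1: "1 \<le> t" "t \<le> k" using tpos t t_def by auto
        have "ceil_div (N + t) k = Q + 1" using ceil_div_eq[OF t1, of Q] NQ by simp
        moreover have "modstar (N+t) k = t" using modstar_eq[OF t1, of Q] NQ by simp
        moreover have "\<forall>c. ch c \<le> Q + 1"
        proof fix c show "ch c \<le> Q+1" using ch[of c] cfle[of c] by simp qed
        moreover have "{c. ch c = Q+1} \<subseteq> D"
        proof fix c assume "c \<in> {c. ch c = Q+1}" thus "c \<in> D" using ch[of c] cfle[of c] by (cases "c \<in> D") auto qed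
        hence "card {c. ch c = Q+1} \<le> t" using fin t_def card_mono by blast
        ultimately show ?thesis unfolding secnt_def t_def by simp
      next
        case mpos: False
        have m1: "1 \<le> m" "m \<le> k" using mpos k unfolding m_def by auto
        have cq: "ceil_div N k = Q + 1" using ceil_div_eq[OF m1] Nqm by simp
        have ms: "modstar N k = m" using modstar_eq[OF m1] Nqm by simp
        define Full where "Full = {c. cf c = Q + 1}"
        have cfle: "\<And>c. cf c \<le> Q + 1" using sN cq unfolding secnt_def by auto
        have cFull: "card Full \<le> m" using sN cq ms unfolding secnt_def Full_def by auto
        have finFull: "finite Full" using sup by (rule rev_finite_subset) (auto simp: Full_def)
        define A where "A = card (D \<inter> Full)"
        have condA: "A = 0 \<or> A + k \<le> m + t" using cond mpos unfolding A_def Full_def m_def t_def cq by auto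
        show ?thesis
        proof (cases "m + t \<le> k")
          case True
          hence "A = 0" using condA t_def tpos by auto
          hence DF: "D \<inter> Full = {}" using fin A_def by auto
          have mt: "1 \<le> m + t" "m + t \<le> k" using True m1 by auto
          have "N + t = Q*k + (m+t)" using Nqm by simp
          hence c2: "ceil_div (N + t) k = Q + 1" "modstar (N+t) k = m + t"
            using ceil_div_eq[OF mt, of Q] modstar_eq[OF mt, of Q] by (auto simp: add.assoc)
          have "\<forall>c. ch c \<le> Q + 1"
          proof
            fix c show "ch c \<le> Q + 1"
            proof (cases "c \<in> D")
              case True
              hence "cf c \<noteq> Q + 1" using DF Full_def by auto
              hence "cf c \<le> Q" using cfle[of c] by simp
              thus ?thesis using ch True by simp
            qed (use ch cfle in simp)
          qed
          moreover have "{c. ch c = Q+1} \<subseteq> Full \<union> D" using ch unfolding Full_def by (auto split: if_splits)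
          hence "card {c. ch c = Q+1} \<le> card (Full \<union> D)" using finFull fin by (intro card_mono) auto
          hence "card {c. ch c = Q+1} \<le> m + t" using card_Un_le[of Full D] cFull t_def by linarith
          ultimately show ?thesis unfolding secnt_def using c2 t_def by simp
        next
          case False
          have mt: "1 \<le> m + t - k" "m + t - k \<le> k" using False t t_def m1 by auto
          have "N + t = (Q+1)*k + (m+t-k)" using Nqm False by simp
          hence c2: "ceil_div (N + t) k = Q + 2" "modstar (N+t) k = m + t - k"
            using ceil_div_eq[OF mt, of "Q+1"] modstar_eq[OF mt, of "Q+1"] by auto
          have "\<forall>c. ch c \<le> Q + 2"
          proof fix c show "ch c \<le> Q+2" using ch[of c] cfle[of c] by simp qed
          moreover have "{c. ch c = Q+2} \<subseteq> D \<inter> Full"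
          proof fix c assume "c \<in> {c. ch c = Q+2}" thus "c \<in> D \<inter> Full" using ch[of c] cfle[of c] unfolding Full_def by (cases "c \<in> D") auto qed
          hence "card {c. ch c = Q+2} \<le> A" unfolding A_def using fin by (intro card_mono) auto
          hence "card {c. ch c = Q+2} \<le> m + t - k" using condA False by linarith
          ultimately show ?thesis unfolding secnt_def using c2 t_def by simp
        qed
      qed
    qed
  qed
qed

lemma greedy:
  assumes "distinct xs" "\<forall>x\<in>set xs. finite (L x) \<and> card (L x) = k"
   "\<forall>i<length xs. finite (F i) \<and> card (F i) + i < k"
  shows "\<exists>g. inj_on g (set xs) \<and> (\<forall>i<length xs. g (xs!i) \<in> L (xs!i) - F i)"
  using assms
proof (induction xs rule: rev_induct)
  case Nil thus ?case by auto
next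
  case (snoc y xs)
  have "\<forall>i<length xs. finite (F i) \<and> card (F i) + i < k" using snoc.prems(3) by auto
  then obtain g where g: "inj_on g (set xs)" "\<forall>i<length xs. g (xs!i) \<in> L (xs!i) - F i"
    using snoc by auto
  define n where "n = length xs"
  have Fn: "finite (F n)" "card (F n) + n < k" using snoc.prems(3) n_def by auto
  have Ly: "finite (L y)" "card (L y) = k" using snoc.prems(2) by auto
  have "card (F n \<union> g ` set xs) \<le> card (F n) + n"
    using card_Un_le[of "F n" "g ` set xs"] card_image_le[of "set xs" g] distinct_card[of xs] snoc.prems(1) n_def
    by auto
  hence "card (F n \<union> g ` set xs) < card (L y)" using Fn Ly by linarith
  hence "\<not> L y \<subseteq> F n \<union> g ` set xs" using Fn card_mono[of "F n \<union> g ` set xs" "L y"] by auto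
  then obtain c where c: "c \<in> L y" "c \<notin> F n" "c \<notin> g ` set xs" by auto
  have yn: "y \<notin> set xs" using snoc.prems(1) by auto
  define g' where "g' = g(y := c)"
  have "inj_on g' (set (xs @ [y]))" using g(1) c(3) yn unfolding g'_def by (auto simp: inj_on_def)
  moreover have "\<forall>i<length (xs @ [y]). g' ((xs@[y])!i) \<in> L ((xs@[y])!i) - F i"
  proof (intro allI impI)
    fix i assume i: "i < length (xs @ [y])"
    show "g' ((xs@[y])!i) \<in> L ((xs@[y])!i) - F i"
    proof (cases "i < length xs")
      case True
      hence "xs!i \<noteq> y" using yn nth_mem by force
      thus ?thesis using g(2) True unfolding g'_def by (simp add: nth_append)
    next
      case False
      hence "i = n" using i n_def by simp
      thus ?thesis using c unfolding g'_def n_def by (simp add: nth_append)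
    qed
  qed
  ultimately show ?case by blast
qed

lemma card_class_split:
  assumes fin: "finite V" and TV: "T \<subseteq> V" and inj: "inj_on g T"
  shows "card {v\<in>V. (if v \<in> T then g v else f v) = c} = card {v\<in>V-T. f v = c} + (if c \<in> g ` T then 1 else 0)"
proof -
  have "{v\<in>V. (if v \<in> T then g v else f v) = c} = {v\<in>V-T. f v = c} \<union> {v\<in>T. g v = c}" using TV by auto
  moreover have "finite {v\<in>V-T. f v = c}" by (rule finite_subset[of _ V]) (use fin in auto)
  moreover have "finite {v\<in>T. g v = c}" by (rule finite_subset[of _ V]) (use fin TV in auto)
  moreover have "{v\<in>V-T. f v = c} \<inter> {v\<in>T. g v = c} = {}" by auto
  ultimately have e: "card {v\<in>V. (if v \<in> T then g v else f v) = c} = card {v\<in>V-T. f v = c} + card {v\<in>T. g v = c}"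
    by (simp add: card_Un_disjoint)
  have "card {v\<in>T. g v = c} = (if c \<in> g ` T then 1 else 0)"
  proof (cases "c \<in> g ` T")
    case True
    then obtain x where x: "x \<in> T" "g x = c" by auto
    hence "{v\<in>T. g v = c} = {x}" using inj unfolding inj_on_def by auto
    thus ?thesis using True by simp
  next
    case False
    hence "{v\<in>T. g v = c} = {}" by auto
    hence "card {v\<in>T. g v = c} = 0" by (metis card.empty)
    thus ?thesis using False by simp
  qed
  thus ?thesis using e by simp
qed

lemma extend_core:
  assumes fin: "finite V" and TV: "T \<subseteq> V" and k: "k \<ge> 1" and tk: "card T \<le> k"
  and symE: "\<And>u v. E u v \<Longrightarrow> E v u" and irr: "\<And>u. \<not> E u u"
  and f: "SE_coloring (V - T) E L k f"
  and ginj: "inj_on g T"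
  and gL: "\<forall>x\<in>T. g x \<in> L x"
  and gnb: "\<forall>x\<in>T. \<forall>u\<in>V-T. E x u \<longrightarrow> g x \<noteq> f u"
  and cond: "card (V - T) mod k = 0
     \<or> card {x\<in>T. g x \<in> {c. card {v\<in>V-T. f v = c} = ceil_div (card (V-T)) k}} = 0
     \<or> card {x\<in>T. g x \<in> {c. card {v\<in>V-T. f v = c} = ceil_div (card (V-T)) k}} + k \<le> card (V - T) mod k + card T"
  shows "SE_coloring V E L k (\<lambda>v. if v \<in> T then g v else f v)"
proof -
  define h where "h = (\<lambda>v. if v \<in> T then g v else f v)"
  have fL: "L_coloring (V - T) E L f" using f unfolding SE_coloring_def by auto
  have Lc: "L_coloring V E L h"
    unfolding L_coloring_def
  proof (intro conjI ballI impI)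
    fix v assume "v \<in> V" thus "h v \<in> L v" using gL fL unfolding h_def L_coloring_def by auto
  next
    fix u v assume uv: "u \<in> V" "v \<in> V" "E u v"
    show "h u \<noteq> h v"
    proof (cases "u \<in> T")
      case True
      show ?thesis
      proof (cases "v \<in> T")
        case True
        have "u \<noteq> v" using uv irr by auto
        thus ?thesis using \<open>u\<in>T\<close> True ginj unfolding h_def inj_on_def by auto
      next
        case False thus ?thesis using \<open>u\<in>T\<close> gnb uv unfolding h_def by auto
      qed
    next
      case False
      show ?thesis
      proof (cases "v \<in> T")
        case True
        have "E v u" using symE uv by auto
        thus ?thesis using False True gnb uv unfolding h_def by fastforce
      next
        case False thus ?thesis using \<open>u\<notin>T\<close> fL uv unfolding h_def L_coloring_def by auto
      qed
    qed
  qed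
  define cf where "cf c = card {v\<in>V-T. f v = c}" for c
  define ch where "ch c = card {v\<in>V. h v = c}" for c
  define N where "N = card (V - T)"
  have cT: "card (g ` T) = card T" using ginj card_image by blast
  have finT: "finite T" using fin TV finite_subset by auto
  have "card T \<le> card V" using card_mono[OF fin TV] .
  hence cV: "card V = N + card T" unfolding N_def using card_Diff_subset[OF finT TV] by simp
  have chs: "\<And>c. ch c = cf c + (if c \<in> g ` T then 1 else 0)"
    unfolding ch_def cf_def h_def using card_class_split[OF fin TV ginj] by simp
  have sup: "finite {c. cf c \<noteq> 0}"
  proof (rule finite_subset[of _ "f ` (V - T)"])
    show "{c. cf c \<noteq> 0} \<subseteq> f ` (V - T)"
    proof
      fix c assume c: "c \<in> {c. cf c \<noteq> 0}"
      show "c \<in> f ` (V - T)"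
      proof (rule ccontr)
        assume "c \<notin> f ` (V - T)"
        hence "{v\<in>V-T. f v = c} = {}" by auto
        hence "cf c = 0" unfolding cf_def by (metis card.empty)
        thus False using c by simp
      qed
    qed
  qed (use fin in auto)
  have se: "(N = 0 \<and> (\<forall>c. cf c = 0)) \<or> (N > 0 \<and> secnt k N cf)"
  proof (cases "N = 0")
    case True
    hence "V - T = {}" unfolding N_def using fin by auto
    hence "{v\<in>V-T. f v = c} = {}" for c by auto
    hence "cf c = 0" for c unfolding cf_def by (metis card.empty)
    thus ?thesis using True by auto
  next
    case False
    hence "V - T \<noteq> {}" unfolding N_def by (metis card.empty)
    thus ?thesis using False f unfolding SE_coloring_def secnt_def cf_def N_def by auto
  qed
  have gi: "g ` {x\<in>T. g x \<in> Fu} = g ` T \<inter> Fu" for Fu by auto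
  have "card {x\<in>T. g x \<in> Fu} = card (g ` T \<inter> Fu)" for Fu
  proof -
    have "inj_on g {x\<in>T. g x \<in> Fu}" by (rule inj_on_subset[OF ginj]) auto
    thus ?thesis using gi[of Fu] card_image by metis
  qed
  note ce = this
  define Fu0 where "Fu0 = {c. cf c = ceil_div N k}"
  have cond0: "N mod k = 0 \<or> card {x\<in>T. g x \<in> Fu0} = 0 \<or> card {x\<in>T. g x \<in> Fu0} + k \<le> N mod k + card T"
    using cond unfolding Fu0_def cf_def N_def .
  have cond': "N mod k = 0 \<or> card (g ` T \<inter> {c. cf c = ceil_div N k}) = 0
        \<or> card (g ` T \<inter> {c. cf c = ceil_div N k}) + k \<le> N mod k + card (g ` T)"
    using cond0 ce[of Fu0] cT unfolding Fu0_def[symmetric] by simp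
  show ?thesis
  proof (cases "V = {}")
    case True thus ?thesis using Lc unfolding SE_coloring_def h_def by simp
  next
    case False
    hence pos: "N + card (g ` T) > 0" using cV cT fin by (metis card_gt_0_iff)
    have "secnt k (N + card (g ` T)) ch"
      using count_core[OF k _ _ chs sup se cond' pos] finT cT tk by simp
    hence "secnt k (card V) ch" using cV cT by simp
    thus ?thesis using Lc unfolding SE_coloring_def secnt_def ch_def h_def by simp
  qed
qed

definition sba :: "nat \<Rightarrow> nat \<Rightarrow> nat \<Rightarrow> nat" where
  "sba k N t = (if N mod k = 0 \<or> t = k then 0 else min t (k - N mod k))"

definition outd :: "'a set \<Rightarrow> ('a \<Rightarrow> 'a \<Rightarrow> bool) \<Rightarrow> 'a set \<Rightarrow> 'a \<Rightarrow> nat" where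
  "outd W E T x = card {u \<in> W - T. E x u}"

lemma SB:
  assumes fin: "finite V" and symE: "\<And>u v. E u v \<Longrightarrow> E v u" and irr: "\<And>u. \<not> E u u"
   and Lk: "\<forall>v\<in>V. finite (L v) \<and> card (L v) = k" and k: "k \<ge> 1"
   and xs: "distinct xs" "set xs = T" "T \<subseteq> V" "length xs \<le> k"
   and cond: "\<forall>i<length xs. outd V E T (xs!i) + (if i < sba k (card V - length xs) (length xs) then (card V - length xs) mod k else 0) + i < k"
  shows "safe V E L k T"
  unfolding safe_def
proof (intro allI impI)
  fix f assume f: "SE_coloring (V - T) E L k f"
  define t where "t = length xs"
  have cT: "card T = t" using xs distinct_card t_def by metis
  have finT: "finite T" using xs by auto
  define N where "N = card (V - T)"
  have NV: "N = card V - t" unfolding N_def using card_Diff_subset[OF finT xs(3)] cT by simp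
  define m where "m = N mod k"
  define a where "a = sba k N t"
  define Full where "Full = {c. card {v\<in>V-T. f v = c} = ceil_div N k}"
  have cFull: "m \<noteq> 0 \<Longrightarrow> finite Full \<and> card Full \<le> m"
  proof -
    assume m0: "m \<noteq> 0"
    hence Np: "N > 0" unfolding m_def by (cases N) auto
    hence ne: "V - T \<noteq> {}" unfolding N_def by (metis card.empty less_irrefl)
    have "card Full \<le> modstar N k" using f ne unfolding SE_coloring_def Full_def N_def by auto
    moreover have "modstar N k = m" using m0 unfolding modstar_def m_def by simp
    moreover have "ceil_div N k \<ge> 1"
    proof -
      have "N + k - 1 \<ge> k" using Np k by simp
      hence "k div k \<le> (N + k - 1) div k" by (rule div_le_mono)
      thus ?thesis unfolding ceil_div_def using k by simp
    qed
    hence "Full \<subseteq> f ` (V - T)"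
    proof -
      have "c \<in> f ` (V - T)" if "c \<in> Full" for c
      proof -
        have "card {v\<in>V-T. f v = c} \<ge> 1" using that \<open>ceil_div N k \<ge> 1\<close> unfolding Full_def by simp
        hence "{v\<in>V-T. f v = c} \<noteq> {}" by (metis card.empty not_one_le_zero)
        thus ?thesis by auto
      qed
      thus ?thesis by auto
    qed
    hence "finite Full" using fin finite_subset by blast
    ultimately show ?thesis by simp
  qed
  define F where "F i = f ` {u\<in>V-T. E (xs!i) u} \<union> (if i < a then Full else {})" for i
  have Fok: "\<forall>i<length xs. finite (F i) \<and> card (F i) + i < k"
  proof (intro allI impI)
    fix i assume i: "i < length xs"
    have f1: "finite {u\<in>V-T. E (xs!i) u}" using fin by auto
    have c1: "card (f ` {u\<in>V-T. E (xs!i) u}) \<le> outd V E T (xs!i)"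
      unfolding outd_def using card_image_le[OF f1] by simp
    have ci: "outd V E T (xs!i) + (if i < a then m else 0) + i < k"
      using cond i unfolding a_def m_def NV t_def by simp
    show "finite (F i) \<and> card (F i) + i < k"
    proof (cases "i < a")
      case True
      hence "m \<noteq> 0" unfolding a_def sba_def m_def by (auto split: if_splits)
      hence "finite Full" "card Full \<le> m" using cFull by auto
      moreover have "card (F i) \<le> card (f ` {u\<in>V-T. E (xs!i) u}) + card Full"
        unfolding F_def using True card_Un_le by simp
      ultimately show ?thesis using ci True c1 f1 unfolding F_def by auto
    next
      case False
      thus ?thesis using ci c1 f1 unfolding F_def by auto
    qed
  qed
  have Lx: "\<forall>x\<in>set xs. finite (L x) \<and> card (L x) = k" using Lk xs by auto
  obtain g where g: "inj_on g (set xs)" "\<forall>i<length xs. g (xs!i) \<in> L (xs!i) - F i"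
    using greedy[OF xs(1) Lx Fok] by blast
  have gT: "\<forall>x\<in>T. \<exists>i<t. x = xs!i" using xs t_def by (metis in_set_conv_nth)
  have ginj: "inj_on g T" using g xs by simp
  have gL: "\<forall>x\<in>T. g x \<in> L x" using g gT t_def by auto
  have gnb: "\<forall>x\<in>T. \<forall>u\<in>V-T. E x u \<longrightarrow> g x \<noteq> f u"
  proof (intro ballI impI)
    fix x u assume "x \<in> T" "u \<in> V - T" "E x u"
    then obtain i where "i < t" "x = xs!i" using gT by auto
    thus "g x \<noteq> f u" using g(2) \<open>u \<in> V - T\<close> \<open>E x u\<close> t_def unfolding F_def by auto
  qed
  define A where "A = card {x\<in>T. g x \<in> Full}"
  have condA: "N mod k = 0 \<or> A = 0 \<or> A + k \<le> N mod k + card T"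
  proof (cases "m = 0")
    case True thus ?thesis unfolding m_def by simp
  next
    case m0: False
    have AF: "A \<le> card Full"
    proof -
      have "inj_on g {x\<in>T. g x \<in> Full}" by (rule inj_on_subset[OF ginj]) auto
      hence "card {x\<in>T. g x \<in> Full} = card (g ` {x\<in>T. g x \<in> Full})"
        using card_image by metis
      also have "\<dots> \<le> card Full" using cFull[OF m0] by (intro card_mono) auto
      finally show ?thesis unfolding A_def .
    qed
    show ?thesis
    proof (cases "t = k")
      case True thus ?thesis using AF cFull[OF m0] cT unfolding m_def by simp
    next
      case tk: False
      hence aeq: "a = min t (k - m)" using m0 unfolding a_def sba_def m_def by simp
      have sub: "{x\<in>T. g x \<in> Full} \<subseteq> (\<lambda>i. xs!i) ` {a..<t}"
      proof
        fix x assume x: "x \<in> {x\<in>T. g x \<in> Full}"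
        then obtain i where i: "i < t" "x = xs!i" using gT by auto
        have "\<not> i < sba k N t"
        proof
          assume "i < sba k N t"
          hence "g (xs!i) \<notin> Full" using g(2) i t_def unfolding F_def a_def by auto
          thus False using x i by auto
        qed
        hence "i \<ge> a" using i(1) aeq unfolding a_def by linarith
        thus "x \<in> (\<lambda>i. xs!i) ` {a..<t}" using i by auto
      qed
      have "A \<le> t - a"
      proof -
        have "A \<le> card ((\<lambda>i. xs!i) ` {a..<t})" unfolding A_def using sub by (intro card_mono) auto
        also have "\<dots> \<le> card {a..<t}" by (rule card_image_le) auto
        finally show ?thesis by simp
      qed
      thus ?thesis using aeq cT unfolding m_def by (cases "t \<le> k - m") auto
    qed
  qed
  have "SE_coloring V E L k (\<lambda>v. if v \<in> T then g v else f v)"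
    using extend_core[OF fin xs(3) k _ symE irr f ginj gL gnb] condA cT xs(4) t_def
    unfolding A_def Full_def N_def by simp
  moreover have "\<forall>v\<in>V - T. (\<lambda>v. if v \<in> T then g v else f v) v = f v" by auto
  ultimately show "\<exists>g. SE_coloring V E L k g \<and> (\<forall>v\<in>V - T. g v = f v)" by blast
qed

lemma sba_facts:
  assumes "k \<ge> 1"
  shows "i < sba k N t \<Longrightarrow> N mod k + i < k"
    and "N mod k = 0 \<Longrightarrow> sba k N t = 0"
    and "t = k \<Longrightarrow> sba k N t = 0"
    and "N mod k \<noteq> 0 \<Longrightarrow> t \<noteq> k \<Longrightarrow> sba k N t = min t (k - N mod k)"
  using assms unfolding sba_def by (auto split: if_splits)

lemma SB_gen:
  assumes fin: "finite V" and symE: "\<And>u v. E u v \<Longrightarrow> E v u" and irr: "\<And>u. \<not> E u u"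
   and Lk: "\<forall>v\<in>V. finite (L v) \<and> card (L v) = k" and k: "k \<ge> 1"
   and xs: "distinct (pre @ ys)" "set (pre @ ys) = T" "T \<subseteq> V" "card T \<le> k"
   and ys0: "\<forall>x\<in>set ys. outd V E T x = 0"
   and cond: "\<forall>i<length pre. outd V E T (pre!i) + (if i < sba k (card V - card T) (card T) then (card V - card T) mod k else 0) + i < k"
  shows "safe V E L k T"
proof -
  have lT: "length (pre @ ys) = card T" using xs distinct_card by metis
  show ?thesis
  proof (rule SB[OF fin symE irr Lk k xs(1,2,3)])
    show "length (pre @ ys) \<le> k" using lT xs by simp
    show "\<forall>i<length (pre @ ys). outd V E T ((pre @ ys) ! i) + (if i < sba k (card V - length (pre @ ys)) (length (pre @ ys)) then (card V - length (pre @ ys)) mod k else 0) + i < k"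
    proof (intro allI impI)
      fix i assume i: "i < length (pre @ ys)"
      show "outd V E T ((pre @ ys) ! i) + (if i < sba k (card V - length (pre @ ys)) (length (pre @ ys)) then (card V - length (pre @ ys)) mod k else 0) + i < k"
      proof (cases "i < length pre")
        case True thus ?thesis using cond[rule_format, of i] lT by (auto simp: nth_append split: if_splits)
      next
        case False
        hence "(pre @ ys)!i \<in> set ys" using i by (simp add: nth_append)
        hence o: "outd V E T ((pre @ ys) ! i) = 0" using ys0 by auto
        show ?thesis
        proof (cases "i < sba k (card V - length (pre @ ys)) (length (pre @ ys))")
          case True thus ?thesis using o sba_facts(1)[OF k True] by simp
        next
          case False thus ?thesis using o i lT xs(4) by simp
        qed
      qed
    qed
  qed
qed

lemma SB_zero:
  assumes fin: "finite V" and symE: "\<And>u v. E u v \<Longrightarrow> E v u" and irr: "\<And>u. \<not> E u u"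
   and Lk: "\<forall>v\<in>V. finite (L v) \<and> card (L v) = k" and k: "k \<ge> 1"
   and T: "T \<subseteq> V" "card T \<le> k" and z: "\<forall>x\<in>T. outd V E T x = 0"
  shows "safe V E L k T"
proof -
  obtain ys where ys: "set ys = T" "distinct ys" using finite_distinct_list[of T] fin T finite_subset by blast
  show ?thesis by (rule SB_gen[OF fin symE irr Lk k, where pre="[]" and ys=ys]) (use ys T z in auto)
qed

lemma SB_one:
  assumes fin: "finite V" and symE: "\<And>u v. E u v \<Longrightarrow> E v u" and irr: "\<And>u. \<not> E u u"
   and Lk: "\<forall>v\<in>V. finite (L v) \<and> card (L v) = k" and k: "k \<ge> 3"
   and T: "T \<subseteq> V" "card T \<le> k" and p: "p \<in> T" "outd V E T p \<le> 1"
   and z: "\<forall>x\<in>T-{p}. outd V E T x = 0"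
   and c: "card T \<ge> 2 \<or> (card V - card T) mod k \<noteq> k - 1"
  shows "safe V E L k T"
proof -
  have k1: "k \<ge> 1" using k by simp
  have finT: "finite T" using fin T finite_subset by blast
  define m where "m = (card V - card T) mod k"
  have mk: "m < k" unfolding m_def using k by simp
  show ?thesis
  proof (cases "m = k - 1 \<and> card T \<ge> 2")
    case True
    then obtain q where q: "q \<in> T" "q \<noteq> p"
      by (metis One_nat_def card_le_Suc0_iff_eq finT not_less_eq_eq numeral_2_eq_2 p(1))
    obtain ys where ys: "set ys = T - {p,q}" "distinct ys" using finite_distinct_list[of "T - {p,q}"] finT by blast
    show ?thesis
    proof (rule SB_gen[OF fin symE irr Lk k1, where pre="[q,p]" and ys=ys])
      show "distinct ([q, p] @ ys)" "set ([q, p] @ ys) = T" using ys q p by auto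
      show "\<forall>x\<in>set ys. outd V E T x = 0" using ys z by auto
      have m0: "m \<noteq> 0" using True k by simp
      show "\<forall>i<length [q,p]. outd V E T ([q,p]!i) + (if i < sba k (card V - card T) (card T) then (card V - card T) mod k else 0) + i < k"
      proof (cases "card T = k")
        case True
        hence "sba k (card V - card T) (card T) = 0" using sba_facts(3)[OF k1] by simp
        thus ?thesis using z q p k by (auto simp: less_Suc_eq)
      next
        case False
        hence "sba k (card V - card T) (card T) = 1" using sba_facts(4)[OF k1] m0 \<open>m = k - 1 \<and> card T \<ge> 2\<close> k
          unfolding m_def by auto
        thus ?thesis using z q p k \<open>m = k - 1 \<and> card T \<ge> 2\<close> unfolding m_def by (auto simp: less_Suc_eq)
      qed
    qed (use T in auto)
  next
    case False
    hence mk2: "m = 0 \<or> m \<le> k - 2" using c mk unfolding m_def by auto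
    obtain ys where ys: "set ys = T - {p}" "distinct ys" using finite_distinct_list[of "T - {p}"] finT by blast
    show ?thesis
    proof (rule SB_gen[OF fin symE irr Lk k1, where pre="[p]" and ys=ys])
      show "distinct ([p] @ ys)" "set ([p] @ ys) = T" using ys p by auto
      show "\<forall>x\<in>set ys. outd V E T x = 0" using ys z by auto
      show "\<forall>i<length [p]. outd V E T ([p]!i) + (if i < sba k (card V - card T) (card T) then (card V - card T) mod k else 0) + i < k"
        using p mk2 k sba_facts(2)[OF k1] unfolding m_def by (auto split: if_splits)
    qed (use T in auto)
  qed
qed

lemma SB_two:
  assumes fin: "finite V" and symE: "\<And>u v. E u v \<Longrightarrow> E v u" and irr: "\<And>u. \<not> E u u"
   and Lk: "\<forall>v\<in>V. finite (L v) \<and> card (L v) = k" and k: "k \<ge> 3"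
   and T: "T \<subseteq> V" "card T \<le> k" and p: "p \<in> T" "outd V E T p \<le> 1"
   and q: "q \<in> T" "outd V E T q \<le> 1" "p \<noteq> q"
   and z: "\<forall>x\<in>T-{p,q}. outd V E T x = 0"
   and c: "card T = k \<or> (card V - card T) mod k = 0 \<or> (card V - card T) mod k + 3 \<le> k
           \<or> (3 \<le> card T \<and> 4 \<le> k)"
  shows "safe V E L k T"
proof -
  have k1: "k \<ge> 1" using k by simp
  have finT: "finite T" using fin T finite_subset by blast
  define m where "m = (card V - card T) mod k"
  have mk: "m < k" unfolding m_def using k by simp
  define sb where "sb = sba k (card V - card T) (card T)"
  show ?thesis
  proof (cases "card T = k \<or> m = 0 \<or> m + 3 \<le> k")
    case True
    obtain ys where ys: "set ys = T - {p,q}" "distinct ys" using finite_distinct_list[of "T - {p,q}"] finT by blast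
    show ?thesis
    proof (rule SB_gen[OF fin symE irr Lk k1, where pre="[p,q]" and ys=ys])
      show "distinct ([p, q] @ ys)" "set ([p, q] @ ys) = T" using ys q p by auto
      show "\<forall>x\<in>set ys. outd V E T x = 0" using ys z by auto
      have "sb = 0 \<or> m + 3 \<le> k" using True sba_facts(2,3)[OF k1] unfolding sb_def m_def by auto
      thus "\<forall>i<length [p,q]. outd V E T ([p,q]!i) + (if i < sba k (card V - card T) (card T) then (card V - card T) mod k else 0) + i < k"
        using p q k unfolding sb_def[symmetric] m_def[symmetric] by (auto simp: less_Suc_eq)
    qed (use T in auto)
  next
    case False
    hence c3: "3 \<le> card T" "4 \<le> k" "m \<noteq> 0" "card T \<noteq> k" "m + 3 > k" using c unfolding m_def by auto
    have "card (T - {p,q}) \<ge> 1" using c3 p q finT by (simp add: card_Diff_subset)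
    then obtain x where x: "x \<in> T" "x \<noteq> p" "x \<noteq> q"
      by (metis Diff_iff card_0_eq finite_Diff insert_iff finT not_one_le_zero ex_in_conv)
    obtain ys where ys: "set ys = T - {p,q,x}" "distinct ys" using finite_distinct_list[of "T - {p,q,x}"] finT by blast
    have sbm: "sb = min (card T) (k - m)" using sba_facts(4)[OF k1] c3 unfolding sb_def m_def by auto
    show ?thesis
    proof (cases "m = k - 2")
      case True
      hence sb2: "sb = 2" using sbm c3 by simp
      show ?thesis
      proof (rule SB_gen[OF fin symE irr Lk k1, where pre="[p,x,q]" and ys=ys])
        show "distinct ([p, x, q] @ ys)" "set ([p, x, q] @ ys) = T" using ys q p x by auto
        show "\<forall>x\<in>set ys. outd V E T x = 0" using ys z by auto
        show "\<forall>i<length [p,x,q]. outd V E T ([p,x,q]!i) + (if i < sba k (card V - card T) (card T) then (card V - card T) mod k else 0) + i < k"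
          using p q k z x sb2 True c3 unfolding sb_def[symmetric] m_def[symmetric] by (auto simp: less_Suc_eq numeral_3_eq_3)
      qed (use T in auto)
    next
      case False
      hence "m = k - 1" using c3 mk by simp
      hence sb1: "sb = 1" using sbm c3 by simp
      show ?thesis
      proof (rule SB_gen[OF fin symE irr Lk k1, where pre="[x,p,q]" and ys=ys])
        show "distinct ([x, p, q] @ ys)" "set ([x, p, q] @ ys) = T" using ys q p x by auto
        show "\<forall>x\<in>set ys. outd V E T x = 0" using ys z by auto
        show "\<forall>i<length [x,p,q]. outd V E T ([x,p,q]!i) + (if i < sba k (card V - card T) (card T) then (card V - card T) mod k else 0) + i < k"
          using p q k z x sb1 \<open>m = k - 1\<close> c3 unfolding sb_def[symmetric] m_def[symmetric] by (auto simp: less_Suc_eq numeral_3_eq_3)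
      qed (use T in auto)
    qed
  qed
qed

lemma SB_single2:
  assumes fin: "finite V" and symE: "\<And>u v. E u v \<Longrightarrow> E v u" and irr: "\<And>u. \<not> E u u"
   and Lk: "\<forall>v\<in>V. finite (L v) \<and> card (L v) = k" and k: "k \<ge> 3"
   and p: "p \<in> V" "outd V E {p} p \<le> 2"
   and c: "(card V - 1) mod k = 0 \<or> (card V - 1) mod k + 3 \<le> k"
  shows "safe V E L k {p}"
proof -
  have k1: "k \<ge> 1" using k by simp
  show ?thesis
  proof (rule SB_gen[OF fin symE irr Lk k1, where pre="[p]" and ys="[]"])
    show "\<forall>i<length [p]. outd V E {p} ([p]!i) + (if i < sba k (card V - card {p}) (card {p}) then (card V - card {p}) mod k else 0) + i < k"
      using p c k sba_facts(2)[OF k1] by auto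
  qed (use p k in auto)
qed

lemma SB_sumk:
  assumes fin: "finite V" and symE: "\<And>u v. E u v \<Longrightarrow> E v u" and irr: "\<And>u. \<not> E u u"
   and Lk: "\<forall>v\<in>V. finite (L v) \<and> card (L v) = k" and k: "k \<ge> 3"
   and T: "T \<subseteq> V" "card T = k" and s: "(\<Sum>x\<in>T. outd V E T x) \<le> 2"
  shows "safe V E L k T"
proof -
  have k1: "k \<ge> 1" using k by simp
  have finT: "finite T" using fin T finite_subset by blast
  define P where "P = {x\<in>T. outd V E T x > 0}"
  have finP: "finite P" using finT unfolding P_def by auto
  have bnd: "outd V E T x + (card P - 1) \<le> 2" if x: "x \<in> P" for x
  proof -
    have "card (P - {x}) = (\<Sum>y\<in>P-{x}. 1)" by simp
    also have "\<dots> \<le> (\<Sum>y\<in>P-{x}. outd V E T y)" by (rule sum_mono) (auto simp: P_def)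
    finally have a: "card (P - {x}) \<le> (\<Sum>y\<in>P-{x}. outd V E T y)" .
    have "(\<Sum>y\<in>P. outd V E T y) = outd V E T x + (\<Sum>y\<in>P-{x}. outd V E T y)"
      using finP x by (simp add: sum.remove)
    moreover have "(\<Sum>y\<in>P. outd V E T y) \<le> (\<Sum>y\<in>T. outd V E T y)"
      using finT by (intro sum_mono2) (auto simp: P_def)
    moreover have "card (P - {x}) = card P - 1" using x finP by simp
    ultimately show ?thesis using a s by linarith
  qed
  obtain pre where pre: "set pre = P" "distinct pre" using finite_distinct_list[OF finP] by blast
  obtain ys where ys: "set ys = T - P" "distinct ys" using finite_distinct_list[of "T - P"] finT by blast
  have lp: "length pre = card P" using pre distinct_card by metis
  show ?thesis
  proof (rule SB_gen[OF fin symE irr Lk k1, where pre=pre and ys=ys])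
    show "distinct (pre @ ys)" "set (pre @ ys) = T" using pre ys by (auto simp: P_def)
    show "\<forall>x\<in>set ys. outd V E T x = 0" using ys by (auto simp: P_def)
    have sb0: "sba k (card V - card T) (card T) = 0" using sba_facts(3)[OF k1] T by simp
    show "\<forall>i<length pre. outd V E T (pre!i) + (if i < sba k (card V - card T) (card T) then (card V - card T) mod k else 0) + i < k"
    proof (intro allI impI)
      fix i assume i: "i < length pre"
      have "pre!i \<in> P" using pre i nth_mem by metis
      hence "outd V E T (pre!i) + (card P - 1) \<le> 2" by (rule bnd)
      thus "outd V E T (pre!i) + (if i < sba k (card V - card T) (card T) then (card V - card T) mod k else 0) + i < k"
        using sb0 i lp k by simp
    qed
  qed (use T in auto)
qed

lemma safe_empty: "safe V E L k {}"
  unfolding safe_def by auto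

lemma grow:
  assumes symE: "\<And>u v. E u v \<Longrightarrow> E v u" and irr: "\<And>u. \<not> E u u"
   and fin: "finite S" and x: "x \<in> S"
  shows "\<exists>A\<subseteq>S. x \<in> A \<and> 2*(card A - 1) \<le> (\<Sum>y\<in>A. card {z\<in>A. E y z}) \<and>
           (card A = Suc j \<or> (card A < Suc j \<and> (\<forall>y\<in>A. \<forall>z\<in>S. E y z \<longrightarrow> z \<in> A)))"
proof (induction j)
  case 0
  show ?case by (rule exI[of _ "{x}"]) (use x in auto)
next
  case (Suc j)
  then obtain A where A: "A \<subseteq> S" "x \<in> A" "2*(card A - 1) \<le> (\<Sum>y\<in>A. card {z\<in>A. E y z})"
    "card A = Suc j \<or> (card A < Suc j \<and> (\<forall>y\<in>A. \<forall>z\<in>S. E y z \<longrightarrow> z \<in> A))" by blast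
  have finA: "finite A" using A(1) fin finite_subset by blast
  show ?case
  proof (cases "\<forall>y\<in>A. \<forall>z\<in>S. E y z \<longrightarrow> z \<in> A")
    case True
    have "card A < Suc (Suc j)" using A(4) by auto
    thus ?thesis using A True by blast
  next
    case False
    then obtain y0 z where yz: "y0 \<in> A" "z \<in> S" "E y0 z" "z \<notin> A" by blast
    hence cA: "card A = Suc j" using A(4) by blast
    define A' where "A' = insert z A"
    have cA': "card A' = Suc (Suc j)" using cA yz finA unfolding A'_def by simp
    have t1: "card {w\<in>A'. E y w} = card {w\<in>A. E y w} + (if E y z then 1 else 0)" if "y \<in> A" for y
    proof -
      have "{w\<in>A'. E y w} = {w\<in>A. E y w} \<union> (if E y z then {z} else {})" unfolding A'_def by auto
      moreover have "finite {w\<in>A. E y w}" using finA by auto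
      moreover have "z \<notin> {w\<in>A. E y w}" using yz by auto
      ultimately show ?thesis by (auto simp: card_insert_if)
    qed
    have "(\<Sum>y\<in>A. card {w\<in>A'. E y w}) = (\<Sum>y\<in>A. card {w\<in>A. E y w}) + (\<Sum>y\<in>A. (if E y z then 1 else 0))"
      using t1 by (simp add: sum.distrib)
    moreover have "(\<Sum>y\<in>A. (if E y z then 1 else 0)::nat) \<ge> 1"
    proof -
      have "(if E y0 z then 1 else 0) \<le> (\<Sum>y\<in>A. (if E y z then 1 else 0)::nat)"
        by (rule member_le_sum) (use yz finA in auto)
      thus ?thesis using yz by simp
    qed
    moreover have "card {w\<in>A'. E z w} \<ge> 1"
    proof -
      have "y0 \<in> {w\<in>A'. E z w}" using yz symE unfolding A'_def by auto
      moreover have "finite {w\<in>A'. E z w}" using finA unfolding A'_def by auto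
      ultimately show ?thesis by (metis One_nat_def Suc_leI card_gt_0_iff empty_iff)
    qed
    moreover have "(\<Sum>y\<in>A'. card {w\<in>A'. E y w}) = card {w\<in>A'. E z w} + (\<Sum>y\<in>A. card {w\<in>A'. E y w})"
      unfolding A'_def using finA yz by simp
    ultimately have "(\<Sum>y\<in>A'. card {w\<in>A'. E y w}) \<ge> (\<Sum>y\<in>A. card {w\<in>A. E y w}) + 2" by linarith
    hence "2*(card A' - 1) \<le> (\<Sum>y\<in>A'. card {w\<in>A'. E y w})" using A(3) cA cA' by simp
    moreover have "A' \<subseteq> S" "x \<in> A'" using A yz unfolding A'_def by auto
    ultimately show ?thesis using cA' by blast
  qed
qed

lemma closed_safe:
  assumes symE: "\<And>u v. E u v \<Longrightarrow> E v u" and irr: "\<And>u. \<not> E u u" and k: "k \<ge> 3"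
  shows "finite V \<Longrightarrow> \<forall>v\<in>V. finite (L v) \<and> card (L v) = k \<Longrightarrow> S \<subseteq> V
    \<Longrightarrow> \<forall>u\<in>S. \<forall>v\<in>V-S. \<not> E u v \<Longrightarrow> \<forall>v\<in>S. card {u\<in>V. E v u} \<le> 2 \<Longrightarrow> safe V E L k S"
proof (induction "card S" arbitrary: V S rule: less_induct)
  case less
  note fin = less.prems(1) and Lk = less.prems(2) and SV = less.prems(3) and cl = less.prems(4)
    and deg = less.prems(5)
  show ?case
  proof (cases "S = {}")
    case True thus ?thesis using safe_empty by simp
  next
    case False
    then obtain x where x: "x \<in> S" by auto
    have finS: "finite S" using fin SV finite_subset by blast
    obtain A where A: "A \<subseteq> S" "x \<in> A" "2*(card A - 1) \<le> (\<Sum>y\<in>A. card {z\<in>A. E y z})"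
      "card A = Suc (k-1) \<or> (card A < Suc (k-1) \<and> (\<forall>y\<in>A. \<forall>z\<in>S. E y z \<longrightarrow> z \<in> A))"
      apply -
      apply (rule grow[where E=E and j="k-1" and S=S and x=x, elim_format])
      apply (erule symE) apply (rule irr) apply (rule finS) apply (rule x) by blast
    have finA: "finite A" using A(1) finS finite_subset by blast
    have AV: "A \<subseteq> V" using A SV by auto
    have safeA: "safe V E L k A"
    proof (cases "card A = k")
      case True
      have dsplit: "card {u\<in>V. E y u} = outd V E A y + card {z\<in>A. E y z}" if "y \<in> A" for y
      proof -
        have "{u\<in>V. E y u} = {u \<in> V - A. E y u} \<union> {z\<in>A. E y z}" using AV by auto
        moreover have "finite {u \<in> V - A. E y u}" "finite {z\<in>A. E y z}" using fin finA by auto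
        ultimately show ?thesis unfolding outd_def by (simp add: card_Un_disjoint disjoint_iff)
      qed
      have "(\<Sum>y\<in>A. card {u\<in>V. E y u}) \<le> (\<Sum>y\<in>A. 2)"
      proof (rule sum_mono)
        fix y assume "y \<in> A" hence "y \<in> S" using A(1) by blast
        thus "card {u\<in>V. E y u} \<le> 2" using deg by blast
      qed
      hence "(\<Sum>y\<in>A. outd V E A y) + (\<Sum>y\<in>A. card {z\<in>A. E y z}) \<le> 2 * card A"
        using dsplit by (simp add: sum.distrib[symmetric])
      hence s2: "(\<Sum>y\<in>A. outd V E A y) \<le> 2" using A(3) True k by linarith
      show ?thesis
        apply (rule SB_sumk[where V=V and E=E and L=L and k=k and T=A])
        apply (rule fin) apply (erule symE) apply (rule irr) apply (rule Lk) apply (rule k) apply (rule AV) apply (rule True) by (rule s2)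
    next
      case False
      hence cA: "card A < k" "\<forall>y\<in>A. \<forall>z\<in>S. E y z \<longrightarrow> z \<in> A" using A(4) k by auto
      have "\<forall>y\<in>A. outd V E A y = 0"
      proof
        fix y assume y: "y \<in> A"
        have "\<not> E y u" if u: "u \<in> V - A" for u
        proof (cases "u \<in> S")
          case True thus ?thesis using cA(2) y u by blast
        next
          case False thus ?thesis using cl y A(1) u by blast
        qed
        hence "{u \<in> V - A. E y u} = {}" by blast
        thus "outd V E A y = 0" unfolding outd_def by (metis card.empty)
      qed
      moreover have "k \<ge> 1" "card A \<le> k" using k cA by auto
      ultimately show ?thesis
        apply -
        apply (rule SB_zero[where V=V and E=E and L=L and k=k and T=A])
        apply (rule fin) apply (erule symE) apply (rule irr) apply (rule Lk) by (assumption | rule AV)+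
    qed
    have "safe (V - A) E L k (S - A)"
    proof (rule less.hyps)
      have "S - A \<subset> S" using x A(2) by blast
      thus "card (S - A) < card S" by (rule psubset_card_mono[OF finS])
      show "finite (V - A)" using fin by simp
      show "\<forall>v\<in>V - A. finite (L v) \<and> card (L v) = k" using Lk by simp
      show "S - A \<subseteq> V - A" using SV by auto
      show "\<forall>u\<in>S - A. \<forall>v\<in>V - A - (S - A). \<not> E u v" using cl by auto
      show "\<forall>v\<in>S - A. card {u \<in> V - A. E v u} \<le> 2"
      proof
        fix v assume v: "v \<in> S - A"
        have "card {u \<in> V - A. E v u} \<le> card {u \<in> V. E v u}" using fin by (intro card_mono) auto
        moreover have "card {u \<in> V. E v u} \<le> 2" using deg v by blast
        ultimately show "card {u \<in> V - A. E v u} \<le> 2" by linarith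
      qed
    qed
    hence "safe V E L k ((S - A) \<union> A)" using safe_comp safeA by blast
    moreover have "(S - A) \<union> A = S" using A by auto
    ultimately show ?thesis by simp
  qed
qed

lemma conn_remove_end:
  assumes irr: "\<And>u. \<not> E u u"
   and conn: "connected_induced E S" and x: "x \<in> S" and y: "y \<in> S" "y \<noteq> x"
   and uniq: "\<forall>z\<in>S. E x z \<longrightarrow> z = y" and uniq2: "\<forall>z\<in>S. E z x \<longrightarrow> z = y"
  shows "connected_induced E (S - {x})"
proof -
  define R where "R = (\<lambda>a b. a \<in> S \<and> b \<in> S \<and> E a b)"
  define R' where "R' = (\<lambda>a b. a \<in> S - {x} \<and> b \<in> S - {x} \<and> E a b)"
  have key: "R\<^sup>*\<^sup>* u w \<Longrightarrow> u \<in> S - {x} \<Longrightarrow> (w \<noteq> x \<longrightarrow> R'\<^sup>*\<^sup>* u w) \<and> (w = x \<longrightarrow> R'\<^sup>*\<^sup>* u y)" for u w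
  proof (induction rule: rtranclp_induct)
    case base thus ?case by auto
  next
    case (step w' w)
    have Rw: "w' \<in> S" "w \<in> S" "E w' w" using step(2) unfolding R_def by auto
    show ?case
    proof (cases "w' = x")
      case True
      hence "w = y" using uniq Rw by auto
      moreover have "R'\<^sup>*\<^sup>* u y" using step True by auto
      ultimately show ?thesis using y by auto
    next
      case False
      hence IH: "R'\<^sup>*\<^sup>* u w'" using step by auto
      show ?thesis
      proof (cases "w = x")
        case True
        hence "w' = y" using uniq2 Rw by auto
        thus ?thesis using IH True by auto
      next
        case wx: False
        have "R' w' w" unfolding R'_def using Rw False wx by auto
        thus ?thesis using IH wx by (meson rtranclp.rtrancl_into_rtrancl)
      qed
    qed
  qed
  have ne: "S - {x} \<noteq> {}" using y by auto
  show ?thesis unfolding connected_induced_def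
  proof (intro conjI ballI ne)
    fix u w assume u: "u \<in> S - {x}" and w: "w \<in> S - {x}"
    have "R\<^sup>*\<^sup>* u w" using conn u w unfolding connected_induced_def R_def by auto
    hence "R'\<^sup>*\<^sup>* u w" using key u w by auto
    thus "(\<lambda>a b. a \<in> S - {x} \<and> b \<in> S - {x} \<and> E a b)\<^sup>*\<^sup>* u w" unfolding R'_def .
  qed
qed

definition ispath :: "('a \<Rightarrow> 'a \<Rightarrow> bool) \<Rightarrow> 'a list \<Rightarrow> bool" where
  "ispath E vs \<longleftrightarrow> distinct vs \<and> (\<forall>i. Suc i < length vs \<longrightarrow> E (vs!i) (vs!Suc i)) \<and>
     (\<forall>i<length vs. \<forall>j<length vs. E (vs!i) (vs!j) \<longrightarrow> i = Suc j \<or> j = Suc i)"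

lemma path_enum:
  assumes symE: "\<And>u v. E u v \<Longrightarrow> E v u" and irr: "\<And>u. \<not> E u u"
  shows "finite S \<Longrightarrow> connected_induced E S \<Longrightarrow> \<forall>v\<in>S. card {z\<in>S. E v z} \<le> 2 \<Longrightarrow> x \<in> S
     \<Longrightarrow> card {z\<in>S. E x z} \<le> 1 \<Longrightarrow> \<exists>vs. ispath E vs \<and> set vs = S \<and> vs \<noteq> [] \<and> hd vs = x"
proof (induction "card S" arbitrary: S x rule: less_induct)
  case less
  note fin = less.prems(1) and conn = less.prems(2) and deg = less.prems(3) and x = less.prems(4)
   and dx = less.prems(5)
  show ?case
  proof (cases "S = {x}")
    case True
    show ?thesis by (rule exI[of _ "[x]"]) (use True irr in \<open>auto simp: ispath_def\<close>)
  next
    case False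
    then obtain w where w: "w \<in> S" "w \<noteq> x" using x by blast
    have "(\<lambda>a b. a \<in> S \<and> b \<in> S \<and> E a b)\<^sup>*\<^sup>* x w" using conn x w unfolding connected_induced_def by auto
    then obtain y where "(\<lambda>a b. a \<in> S \<and> b \<in> S \<and> E a b) x y"
      using w(2) by (cases rule: converse_rtranclpE) auto
    hence y: "y \<in> S" "E x y" by auto
    have yx: "y \<noteq> x" using y irr by auto
    have finN: "finite {z\<in>S. E x z}" using fin by auto
    have uniq: "\<forall>z\<in>S. E x z \<longrightarrow> z = y"
    proof (intro ballI impI)
      fix z assume "z \<in> S" "E x z"
      hence "z \<in> {z\<in>S. E x z}" "y \<in> {z\<in>S. E x z}" using y by auto
      thus "z = y" using card_le_Suc0_iff_eq[OF finN] dx by auto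
    qed
    have uniq2: "\<forall>z\<in>S. E z x \<longrightarrow> z = y"
    proof (intro ballI impI)
      fix z assume "z \<in> S" "E z x"
      thus "z = y" using uniq symE[of z x] by blast
    qed
    define S' where "S' = S - {x}"
    have conn': "connected_induced E S'" unfolding S'_def
      by (rule conn_remove_end[OF irr conn x y(1) yx uniq uniq2])
    have deg': "\<forall>v\<in>S'. card {z\<in>S'. E v z} \<le> 2"
    proof
      fix v assume v: "v \<in> S'"
      have "card {z\<in>S'. E v z} \<le> card {z\<in>S. E v z}" using fin unfolding S'_def by (intro card_mono) auto
      moreover have "v \<in> S" using v unfolding S'_def by blast
      ultimately show "card {z\<in>S'. E v z} \<le> 2" using deg by fastforce
    qed
    have dy: "card {z\<in>S'. E y z} \<le> 1"
    proof -
      have "{z\<in>S'. E y z} = {z\<in>S. E y z} - {x}" unfolding S'_def by auto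
      moreover have "x \<in> {z\<in>S. E y z}" using x symE[OF y(2)] by auto
      moreover have "card {z\<in>S. E y z} \<le> 2" using deg y by auto
      moreover have "finite {z\<in>S. E y z}" using fin by auto
      ultimately show ?thesis by simp
    qed
    have y': "y \<in> S'" using y yx unfolding S'_def by auto
    have "card S' < card S" unfolding S'_def by (rule card_Diff1_less[OF fin x])
    then obtain vs' where vs': "ispath E vs'" "set vs' = S'" "vs' \<noteq> []" "hd vs' = y"
      using less.hyps[OF _ _ conn' deg' y' dy] fin unfolding S'_def by auto
    define vs where "vs = x # vs'"
    have v0: "vs'!0 = y" using vs'(3,4) by (simp add: hd_conv_nth)
    have xn: "x \<notin> set vs'" using vs'(2) unfolding S'_def by auto
    have "ispath E vs"
      unfolding ispath_def
    proof (intro conjI allI impI)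
      show "distinct vs" using vs'(1) xn unfolding vs_def ispath_def by auto
    next
      fix i assume i: "Suc i < length vs"
      show "E (vs!i) (vs!Suc i)"
      proof (cases i)
        case 0 thus ?thesis using v0 y unfolding vs_def by simp
      next
        case (Suc i') thus ?thesis using vs'(1) i unfolding vs_def ispath_def by auto
      qed
    next
      fix i j assume i: "i < length vs" and j: "j < length vs" and e: "E (vs!i) (vs!j)"
      have setvs: "set vs = S" using vs'(2) x unfolding vs_def S'_def by auto
      have inS: "vs!i \<in> S" "vs!j \<in> S" using i j setvs nth_mem by blast+
      have d: "distinct vs'" using vs'(1) unfolding ispath_def by simp
      show "i = Suc j \<or> j = Suc i"
      proof (cases i)
        case 0
        hence "vs!j = y" using uniq inS e unfolding vs_def by auto
        moreover have "j \<noteq> 0"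
        proof
          assume "j = 0" thus False using 0 e irr[of "vs!0"] by simp
        qed
        then obtain j' where j': "j = Suc j'" by (cases j) auto
        ultimately have "vs'!j' = vs'!0" using v0 unfolding vs_def by simp
        hence "j' = 0" using d j j' vs'(3) unfolding vs_def by (simp add: nth_eq_iff_index_eq)
        thus ?thesis using 0 j' by simp
      next
        case (Suc i')
        show ?thesis
        proof (cases j)
          case 0
          hence "vs!i = y" using uniq2 inS e unfolding vs_def by auto
          hence "vs'!i' = vs'!0" using v0 Suc unfolding vs_def by simp
          hence "i' = 0" using d i Suc vs'(3) unfolding vs_def by (simp add: nth_eq_iff_index_eq)
          thus ?thesis using 0 Suc by simp
        next
          case (Suc j')
          have "E (vs'!i') (vs'!j')" using e \<open>i = Suc i'\<close> Suc unfolding vs_def by simp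
          hence "i' = Suc j' \<or> j' = Suc i'" using vs'(1) i j \<open>i = Suc i'\<close> Suc unfolding vs_def ispath_def by auto
          thus ?thesis using \<open>i = Suc i'\<close> Suc by simp
        qed
      qed
    qed
    moreover have "set vs = S" using vs'(2) x unfolding vs_def S'_def by auto
    ultimately show ?thesis unfolding vs_def by auto
  qed
qed

definition piece :: "'a list \<Rightarrow> nat \<Rightarrow> nat \<Rightarrow> 'a set" where
  "piece vs a b = (\<lambda>j. vs!j) ` {a..<b}"

definition Wb :: "'a set \<Rightarrow> 'a list \<Rightarrow> nat \<Rightarrow> 'a set" where
  "Wb V vs b = V - piece vs b (length vs)"

lemma piece_mem: "x \<in> piece vs a b \<longleftrightarrow> (\<exists>j. a \<le> j \<and> j < b \<and> x = vs!j)"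
  unfolding piece_def by auto

lemma card_piece: assumes "distinct vs" "b \<le> length vs" shows "card (piece vs a b) = b - a"
proof -
  have "inj_on (\<lambda>j. vs!j) {a..<b}"
  proof (rule inj_onI)
    fix i j assume "i \<in> {a..<b}" "j \<in> {a..<b}" and e: "vs!i = vs!j"
    hence "i < length vs" "j < length vs" using assms by auto
    thus "i = j" using e nth_eq_iff_index_eq[OF assms(1)] by blast
  qed
  hence "card (piece vs a b) = card {a..<b}" unfolding piece_def by (rule card_image)
  thus ?thesis by simp
qed

lemma piece_sub: "b \<le> length vs \<Longrightarrow> piece vs a b \<subseteq> set vs"
  unfolding piece_def by auto

lemma piece_union: "a \<le> b \<Longrightarrow> b \<le> c \<Longrightarrow> piece vs a b \<union> piece vs b c = piece vs a c"
proof -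
  assume "a \<le> b" "b \<le> c"
  hence "{a..<b} \<union> {b..<c} = {a..<c}" by auto
  thus ?thesis unfolding piece_def by (metis image_Un)
qed

lemma piece_all: "piece vs 0 (length vs) = set vs"
  unfolding piece_def set_conv_nth by auto

lemma piece_empty: "piece vs a a = {}"
  unfolding piece_def by auto

lemma Wb_diff: assumes "a \<le> b" "b \<le> length vs" shows "Wb V vs b - piece vs a b = Wb V vs a"
proof -
  have "piece vs a b \<union> piece vs b (length vs) = piece vs a (length vs)"
    by (rule piece_union[OF assms])
  thus ?thesis unfolding Wb_def by auto
qed

lemma Wb_full: "Wb V vs (length vs) = V"
  unfolding Wb_def piece_empty by simp

lemma card_Wb: assumes "finite V" "set vs \<subseteq> V" "distinct vs" "b \<le> length vs"
  shows "card (Wb V vs b) = card V - (length vs - b)"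
proof -
  have "piece vs b (length vs) \<subseteq> V" using piece_sub assms by blast
  moreover have "finite (piece vs b (length vs))" unfolding piece_def by simp
  ultimately show ?thesis unfolding Wb_def using card_Diff_subset[of "piece vs b (length vs)" V] card_piece[OF assms(3), of "length vs" b]
    by simp
qed

lemma piece_in_Wb: assumes "a \<le> b" "b \<le> length vs" "set vs \<subseteq> V" "distinct vs" shows "piece vs a b \<subseteq> Wb V vs b"
proof
  fix x assume "x \<in> piece vs a b"
  then obtain j where j: "a \<le> j" "j < b" "x = vs!j" by (auto simp: piece_mem)
  have jl: "j < length vs" using j assms by simp
  have "x \<in> V" using j(3) nth_mem[OF jl] assms(3) by blast
  moreover have "x \<notin> piece vs b (length vs)"
  proof
    assume "x \<in> piece vs b (length vs)"
    then obtain j' where j': "b \<le> j'" "j' < length vs" "x = vs!j'" by (auto simp: piece_mem)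
    hence "j = j'" using j jl assms(4) nth_eq_iff_index_eq by metis
    thus False using j j' by simp
  qed
  ultimately show "x \<in> Wb V vs b" unfolding Wb_def by simp
qed


lemma path_out:
  assumes symE: "\<And>u v. E u v \<Longrightarrow> E v u"
   and P: "ispath E vs" and SV: "set vs \<subseteq> V" and fin: "finite V"
   and deg: "\<forall>v\<in>set vs. card {u\<in>V. E v u} \<le> 2" and s2: "2 \<le> length vs"
   and i: "a \<le> i" "i < b" "b \<le> length vs"
  shows "outd (Wb V vs b) E (piece vs a b) (vs!i) \<le> (if i = a then 1 else 0) + (if Suc i = length vs then 1 else 0)"
proof -
  define s where "s = length vs"
  define x where "x = vs!i"
  have il: "i < s" using i s_def by simp
  have dist: "distinct vs" using P unfolding ispath_def by simp
  have cons: "\<And>j. Suc j < s \<Longrightarrow> E (vs!j) (vs!Suc j)" using P unfolding ispath_def s_def by simp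
  have adj: "\<And>j l. j < s \<Longrightarrow> l < s \<Longrightarrow> E (vs!j) (vs!l) \<Longrightarrow> j = Suc l \<or> l = Suc j"
    using P unfolding ispath_def s_def by blast
  define N where "N = {u\<in>V. E x u}"
  have finN: "finite N" using fin N_def by simp
  have xin: "x \<in> set vs" unfolding x_def using il s_def by simp
  have cN: "card N \<le> 2" using deg xin unfolding N_def by blast
  define Z where "Z = {u \<in> Wb V vs b - piece vs a b. E x u}"
  have finZ: "finite Z" unfolding Z_def Wb_def using fin by simp
  have Zsub: "Z \<subseteq> (Z \<inter> set vs) \<union> (N - set vs)" unfolding Z_def N_def Wb_def by auto
  have ZS: "Z \<inter> set vs \<subseteq> (if i = a \<and> 0 < a then {vs!(i-1)} else {})"
  proof
    fix u assume u: "u \<in> Z \<inter> set vs"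
    then obtain j where j: "j < s" "u = vs!j" by (auto simp: in_set_conv_nth s_def)
    have e: "E x u" and uW: "u \<in> Wb V vs b" and uP: "u \<notin> piece vs a b" using u unfolding Z_def by auto
    have "\<not> (a \<le> j \<and> j < b)" using uP j by (auto simp: piece_mem)
    moreover have "\<not> (b \<le> j \<and> j < s)" using uW j unfolding Wb_def s_def by (auto simp: piece_mem)
    ultimately have ja: "j < a" using j by linarith
    have "i = Suc j \<or> j = Suc i" using adj[OF il j(1)] e j(2) unfolding x_def by blast
    hence "i = Suc j" using ja i by linarith
    hence "i = a" "0 < a" "j = i - 1" using ja i by linarith+
    thus "u \<in> (if i = a \<and> 0 < a then {vs!(i-1)} else {})" using j by simp
  qed
  have cZS: "card (Z \<inter> set vs) \<le> (if i = a \<and> 0 < a then 1 else 0)"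
  proof (cases "i = a \<and> 0 < a")
    case True
    hence "card (Z \<inter> set vs) \<le> card {vs!(i-1)}" using ZS by (intro card_mono) auto
    thus ?thesis using True by simp
  next
    case False
    hence "Z \<inter> set vs = {}" using ZS by auto
    thus ?thesis by simp
  qed
  define M where "M = (if 0 < i then {vs!(i-1)} else {}) \<union> (if Suc i < s then {vs!Suc i} else {})"
  have MN: "M \<subseteq> N"
  proof
    fix u assume u: "u \<in> M"
    show "u \<in> N"
    proof (cases "u = vs!(i-1) \<and> 0 < i")
      case True
      have si: "Suc (i-1) = i" using True by simp
      have "E (vs!(i-1)) (vs!Suc (i-1))" using cons[of "i-1"] il si by simp
      hence "E (vs!(i-1)) x" using si unfolding x_def by simp
      hence "E x u" using True symE[of "vs!(i-1)" x] by simp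
      moreover have "u \<in> V" using True il SV s_def by auto
      ultimately show ?thesis unfolding N_def by simp
    next
      case False
      hence "u = vs!Suc i" "Suc i < s" using u unfolding M_def by (auto split: if_splits)
      hence "E x u" using cons unfolding x_def by simp
      moreover have "u \<in> V" using \<open>u = vs!Suc i\<close> \<open>Suc i < s\<close> SV s_def by auto
      ultimately show ?thesis unfolding N_def by simp
    qed
  qed
  have MS: "M \<subseteq> set vs" unfolding M_def using il s_def by auto
  have cM: "card M = (if 0 < i then 1 else 0) + (if Suc i < s then 1 else 0)"
  proof (cases "0 < i \<and> Suc i < s")
    case True
    have l1: "i - 1 < length vs" "Suc i < length vs" using True s_def by auto
    have "i - 1 \<noteq> Suc i" by simp
    hence "vs!(i-1) \<noteq> vs!Suc i" using nth_eq_iff_index_eq[OF dist l1] by simp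
    thus ?thesis using True unfolding M_def by simp
  next
    case False thus ?thesis unfolding M_def by auto
  qed
  have "card (N - set vs) \<le> card (N - M)" using finN MS by (intro card_mono) auto
  also have "\<dots> = card N - card M" using MN finN by (intro card_Diff_subset) (auto intro: finite_subset)
  finally have cNS: "card (N - set vs) \<le> card N - card M" .
  have "card Z \<le> card ((Z \<inter> set vs) \<union> (N - set vs))" using Zsub finZ finN by (intro card_mono) auto
  also have "\<dots> \<le> card (Z \<inter> set vs) + card (N - set vs)" by (rule card_Un_le)
  finally have cZ: "card Z \<le> card (Z \<inter> set vs) + card (N - set vs)" .
  have "outd (Wb V vs b) E (piece vs a b) (vs!i) = card Z" unfolding outd_def Z_def x_def ..
  moreover have "card Z \<le> (if i = a then 1 else 0) + (if Suc i = length vs then 1 else 0)"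
  proof -
    have "card Z \<le> (if i = a \<and> 0 < a then 1 else 0) + (card N - card M)" using cZ cZS cNS by linarith
    thus ?thesis using cM cN s2 i s_def by (auto split: if_splits)
  qed
  ultimately show ?thesis by simp
qed

lemma piece_two_safe:
  assumes fin: "finite V" and symE: "\<And>u v. E u v \<Longrightarrow> E v u" and irr: "\<And>u. \<not> E u u"
   and Lk: "\<forall>v\<in>V. finite (L v) \<and> card (L v) = k" and k: "k \<ge> 3"
   and P: "ispath E vs" and SV: "set vs \<subseteq> V"
   and deg: "\<forall>v\<in>set vs. card {u\<in>V. E v u} \<le> 2" and s2: "2 \<le> length vs"
   and ab: "a + 2 \<le> b" "b \<le> length vs" "b - a \<le> k"
   and c: "b - a = k \<or> (card (Wb V vs b) - (b - a)) mod k = 0 \<or> (card (Wb V vs b) - (b - a)) mod k + 3 \<le> k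
           \<or> (3 \<le> b - a \<and> 4 \<le> k)"
  shows "safe (Wb V vs b) E L k (piece vs a b)"
proof -
  have dist: "distinct vs" using P unfolding ispath_def by simp
  have finW: "finite (Wb V vs b)" using fin unfolding Wb_def by simp
  have LkW: "\<forall>v\<in>Wb V vs b. finite (L v) \<and> card (L v) = k" using Lk unfolding Wb_def by simp
  have TW: "piece vs a b \<subseteq> Wb V vs b" using piece_in_Wb[OF _ ab(2) SV dist] ab by simp
  have cT: "card (piece vs a b) = b - a" by (rule card_piece[OF dist ab(2)])
  have po: "outd (Wb V vs b) E (piece vs a b) (vs!i) \<le> (if i = a then 1 else 0) + (if Suc i = length vs then 1 else 0)"
    if "a \<le> i" "i < b" for i
    by (rule path_out[OF symE P SV fin deg s2 that ab(2)])
  have pT: "vs!a \<in> piece vs a b" using ab by (auto simp: piece_mem)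
  have qT: "vs!(b-1) \<in> piece vs a b" unfolding piece_mem by (rule exI[of _ "b-1"]) (use ab in auto)
  have pO: "outd (Wb V vs b) E (piece vs a b) (vs!a) \<le> 1" using po[of a] ab by simp
  have qO: "outd (Wb V vs b) E (piece vs a b) (vs!(b-1)) \<le> 1"
  proof -
    have "b - 1 \<noteq> a" "a \<le> b - 1" "b - 1 < b" using ab by auto
    thus ?thesis using po[of "b-1"] by (auto split: if_splits)
  qed
  have pq: "vs!a \<noteq> vs!(b-1)"
  proof -
    have "a < length vs" "b - 1 < length vs" "a \<noteq> b - 1" using ab by auto
    thus ?thesis using nth_eq_iff_index_eq[OF dist] by simp
  qed
  have z: "\<forall>x\<in>piece vs a b - {vs!a, vs!(b-1)}. outd (Wb V vs b) E (piece vs a b) x = 0"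
  proof
    fix x assume x: "x \<in> piece vs a b - {vs!a, vs!(b-1)}"
    then obtain i where i: "a \<le> i" "i < b" "x = vs!i" by (auto simp: piece_mem)
    have "i \<noteq> a" "i \<noteq> b - 1" using x i by auto
    hence "Suc i < length vs" using i ab by linarith
    thus "outd (Wb V vs b) E (piece vs a b) x = 0" using po[OF i(1,2)] i \<open>i \<noteq> a\<close> by simp
  qed
  show ?thesis
    by (rule SB_two[OF finW symE irr LkW k TW _ pT pO qT qO pq z]) (use cT ab c in auto)
qed

lemma piece_one_safe:
  assumes fin: "finite V" and symE: "\<And>u v. E u v \<Longrightarrow> E v u" and irr: "\<And>u. \<not> E u u"
   and Lk: "\<forall>v\<in>V. finite (L v) \<and> card (L v) = k" and k: "k \<ge> 3"
   and P: "ispath E vs" and SV: "set vs \<subseteq> V"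
   and deg: "\<forall>v\<in>set vs. card {u\<in>V. E v u} \<le> 2" and s2: "2 \<le> length vs"
   and ab: "a < b" "b < length vs" "b - a \<le> k"
   and c: "2 \<le> b - a \<or> (card (Wb V vs b) - (b - a)) mod k \<noteq> k - 1"
  shows "safe (Wb V vs b) E L k (piece vs a b)"
proof -
  have dist: "distinct vs" using P unfolding ispath_def by simp
  have ab2: "b \<le> length vs" using ab by simp
  have finW: "finite (Wb V vs b)" using fin unfolding Wb_def by simp
  have LkW: "\<forall>v\<in>Wb V vs b. finite (L v) \<and> card (L v) = k" using Lk unfolding Wb_def by simp
  have TW: "piece vs a b \<subseteq> Wb V vs b" using piece_in_Wb[OF _ ab2 SV dist] ab by simp
  have cT: "card (piece vs a b) = b - a" by (rule card_piece[OF dist ab2])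
  have po: "outd (Wb V vs b) E (piece vs a b) (vs!i) \<le> (if i = a then 1 else 0) + (if Suc i = length vs then 1 else 0)"
    if "a \<le> i" "i < b" for i
    by (rule path_out[OF symE P SV fin deg s2 that ab2])
  have pT: "vs!a \<in> piece vs a b" using ab by (auto simp: piece_mem)
  have pO: "outd (Wb V vs b) E (piece vs a b) (vs!a) \<le> 1" using po[of a] ab by simp
  have z: "\<forall>x\<in>piece vs a b - {vs!a}. outd (Wb V vs b) E (piece vs a b) x = 0"
  proof
    fix x assume x: "x \<in> piece vs a b - {vs!a}"
    then obtain i where i: "a \<le> i" "i < b" "x = vs!i" by (auto simp: piece_mem)
    have "i \<noteq> a" using x i by auto
    moreover have "Suc i < length vs" using i ab by linarith
    ultimately show "outd (Wb V vs b) E (piece vs a b) x = 0" using po[OF i(1,2)] i by simp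
  qed
  show ?thesis
    by (rule SB_one[OF finW symE irr LkW k TW _ pT pO z]) (use cT ab c in auto)
qed

lemma blocks:
  assumes fin: "finite V" and symE: "\<And>u v. E u v \<Longrightarrow> E v u" and irr: "\<And>u. \<not> E u u"
   and Lk: "\<forall>v\<in>V. finite (L v) \<and> card (L v) = k" and k: "k \<ge> 3"
   and P: "ispath E vs" and SV: "set vs \<subseteq> V"
   and deg: "\<forall>v\<in>set vs. card {u\<in>V. E v u} \<le> 2" and s2: "2 \<le> length vs"
  shows "c + j*k = length vs \<Longrightarrow> safe (Wb V vs c) E L k (piece vs 0 c) \<Longrightarrow> safe V E L k (set vs)"
proof (induction j arbitrary: c)
  case 0
  thus ?case using Wb_full[of V vs] piece_all[of vs] by simp
next
  case (Suc j)
  have b: "c + k \<le> length vs" using Suc.prems(1) by simp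
  have blk: "safe (Wb V vs (c+k)) E L k (piece vs c (c+k))"
    by (rule piece_two_safe[OF fin symE irr Lk k P SV deg s2]) (use b k in auto)
  have "Wb V vs (c+k) - piece vs c (c+k) = Wb V vs c" by (rule Wb_diff) (use b in auto)
  hence "safe (Wb V vs (c+k) - piece vs c (c+k)) E L k (piece vs 0 c)" using Suc.prems(2) by simp
  hence "safe (Wb V vs (c+k)) E L k (piece vs 0 c \<union> piece vs c (c+k))" using safe_comp blk by blast
  moreover have "piece vs 0 c \<union> piece vs c (c+k) = piece vs 0 (c+k)" by (rule piece_union) auto
  ultimately have "safe (Wb V vs (c+k)) E L k (piece vs 0 (c+k))" by simp
  moreover have "(c + k) + j * k = length vs" using Suc.prems(1) by simp
  ultimately show ?case using Suc.IH by blast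
qed

lemma modplus: "(a + c) mod (k::nat) = (a mod k + c) mod k"
  by (simp add: mod_add_left_eq)

lemma sucmod: "(k::nat) \<ge> 2 \<Longrightarrow> Suc k mod k = 1"
  by (simp add: mod_Suc)

lemma arA1:
  fixes n k :: nat
  assumes k: "k \<ge> 3" and n: "n \<ge> 1" and c1: "n mod k \<noteq> 0" and c2: "(n+1) mod k \<noteq> 0"
  shows "(n-1) mod k = 0 \<or> (n-1) mod k + 3 \<le> k"
proof -
  define m where "m = (n-1) mod k"
  have mk: "m < k" unfolding m_def using k by simp
  have e1: "n mod k = (m + 1) mod k" unfolding m_def using modplus[of "n-1" 1 k] n by simp
  have e2: "(n+1) mod k = (m + 2) mod k" unfolding m_def using modplus[of "n-1" 2 k] n by simp
  have "m \<noteq> k - 1"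
  proof
    assume "m = k - 1" hence "m + 1 = k" using k by simp
    thus False using e1 c1 by simp
  qed
  moreover have "m \<noteq> k - 2"
  proof
    assume "m = k - 2" hence "m + 2 = k" using k by simp
    thus False using e2 c2 by simp
  qed
  ultimately show ?thesis using mk unfolding m_def[symmetric] by linarith
qed

lemma arA2:
  fixes n k :: nat
  assumes k: "k \<ge> 3" and n: "n \<ge> 2" and c1: "n mod k \<noteq> 0" and c2: "n mod k \<noteq> 1"
  shows "(n-2) mod k = 0 \<or> (n-2) mod k + 3 \<le> k"
proof -
  define m where "m = (n-2) mod k"
  have mk: "m < k" unfolding m_def using k by simp
  have "n = (n - 2) + 2" using n by simp
  hence e1: "n mod k = (m + 2) mod k" unfolding m_def using modplus[of "n-2" 2 k] by metis
  have "m \<noteq> k - 1"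
  proof
    assume "m = k - 1" hence "m + 2 = k + 1" using k by simp
    hence "n mod k = 1" using e1 k sucmod[of k] by simp
    thus False using c2 by simp
  qed
  moreover have "m \<noteq> k - 2"
  proof
    assume "m = k - 2" hence "m + 2 = k" using k by simp
    thus False using e1 c1 by simp
  qed
  ultimately show ?thesis using mk unfolding m_def[symmetric] by linarith
qed

lemma arA3:
  fixes x k :: nat
  assumes k: "k \<ge> 3" and x: "x mod k = k - 1"
  shows "(x + 2) mod k = 1"
proof -
  have "(x + 2) mod k = (k - 1 + 2) mod k" using modplus[of x 2 k] x by simp
  also have "k - 1 + 2 = 1 + k" using k by simp
  finally show ?thesis using k sucmod[of k] by simp
qed

lemma arA4:
  fixes n k s :: nat
  assumes k: "k \<ge> 1" and n: "n \<ge> s" and x: "(n - s) mod k = k - 1" and s: "(s - 1) mod k = 0" "s \<ge> 1"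
  shows "n mod k = 0"
proof -
  have "n = (n - s) + (s - 1) + 1" using n s by simp
  hence "n mod k = ((n - s) mod k + (s - 1) mod k + 1) mod k"
    by (metis mod_add_left_eq mod_add_right_eq)
  also have "\<dots> = (k - 1 + 1) mod k" using x s by simp
  also have "\<dots> = 0" using k by simp
  finally show ?thesis .
qed

theorem corollary4p5:
  fixes V :: "'a set" and E :: "'a \<Rightarrow> 'a \<Rightarrow> bool" and L :: "'a \<Rightarrow> 'c set"
    and k :: nat and S :: "'a set" and r :: 'a
  assumes "k \<ge> 3"
    and "graph V E"
    and "k_list_assignment V k L"
    and "bug V E S r"
    and "degree V E r = 2"
    and "(\<not> (\<exists>u\<in>S. \<exists>v\<in>V - S. E u v))
         \<or> (3 \<le> card S \<and> card S \<le> k)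
         \<or> card S \<ge> 5
         \<or> (card S = 1 \<and> card V mod k \<noteq> 0 \<and> (card V + 1) mod k \<noteq> 0)
         \<or> (card S = 2 \<and> card V mod k \<noteq> 0 \<and> card V mod k \<noteq> 1)
         \<or> (card S = 4 \<and> k = 3 \<and> card V mod 3 \<noteq> 0)"
  shows "safe V E L k S"
proof -
  note k = assms(1) and hyp = assms(6)
  have fin: "finite V" using assms(2) unfolding graph_def by simp
  have symE: "\<And>u v. E u v \<Longrightarrow> E v u" using assms(2) unfolding graph_def by blast
  have irr: "\<And>u. \<not> E u u" using assms(2) unfolding graph_def by blast
  have EV: "\<And>u v. E u v \<Longrightarrow> u \<in> V \<and> v \<in> V" using assms(2) unfolding graph_def by blast
  have Lk: "\<forall>v\<in>V. finite (L v) \<and> card (L v) = k" using assms(3) unfolding k_list_assignment_def by simp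
  have SV: "S \<subseteq> V" and conn: "connected_induced E S" and rS: "r \<in> S"
    and d3: "{v \<in> S. degree V E v \<ge> 3} \<subseteq> {r}" using assms(4) unfolding bug_def by auto
  have deg: "\<forall>v\<in>S. card {u\<in>V. E v u} \<le> 2"
  proof
    fix v assume v: "v \<in> S"
    show "card {u\<in>V. E v u} \<le> 2"
    proof (cases "v = r")
      case True thus ?thesis using assms(5) unfolding degree_def by simp
    next
      case False
      hence "\<not> degree V E v \<ge> 3" using d3 v by blast
      thus ?thesis unfolding degree_def by simp
    qed
  qed
  have finS: "finite S" using fin SV finite_subset by blast
  define n where "n = card V"
  have nS: "card S \<le> n" unfolding n_def using card_mono[OF fin SV] .
  show ?thesis
  proof (cases "\<exists>u\<in>S. \<exists>v\<in>V - S. E u v")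
    case False
    hence "\<forall>u\<in>S. \<forall>v\<in>V-S. \<not> E u v" by blast
    thus ?thesis using closed_safe[OF symE irr k fin Lk SV _ deg] by blast
  next
    case True
    then obtain u w where uw: "u \<in> S" "w \<in> V - S" "E u w" by blast
    have du: "card {z\<in>S. E u z} \<le> 1"
    proof -
      have "{z\<in>S. E u z} \<subseteq> {z\<in>V. E u z} - {w}" using SV uw by auto
      hence "card {z\<in>S. E u z} \<le> card ({z\<in>V. E u z} - {w})" using fin by (intro card_mono) auto
      also have "\<dots> = card {z\<in>V. E u z} - 1" using uw fin by simp
      finally show ?thesis using deg uw by fastforce
    qed
    have degS: "\<forall>v\<in>S. card {z\<in>S. E v z} \<le> 2"
    proof
      fix v assume v: "v \<in> S"
      have "card {z\<in>S. E v z} \<le> card {z\<in>V. E v z}" using fin SV by (intro card_mono) auto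
      thus "card {z\<in>S. E v z} \<le> 2" using deg v by fastforce
    qed
    obtain vs where vs: "ispath E vs" "set vs = S" "vs \<noteq> []" "hd vs = u"
      using path_enum[OF symE irr finS conn degS uw(1) du] by blast
    have dist: "distinct vs" using vs(1) unfolding ispath_def by simp
    define s where "s = length vs"
    have sS: "card S = s" unfolding s_def using distinct_card[OF dist] vs(2) by simp
    have svV: "set vs \<subseteq> V" using vs(2) SV by simp
    have degv: "\<forall>v\<in>set vs. card {u\<in>V. E v u} \<le> 2" using deg vs(2) by simp
    have closedF: "\<not> (\<not> (\<exists>u\<in>S. \<exists>v\<in>V - S. E u v))" using True by blast
    show ?thesis
    proof (cases "s = 1")
      case True
      then obtain x where "vs = [x]" using s_def by (cases vs) auto
      hence Sr: "S = {r}" using vs(2) rS by auto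
      have c: "card V mod k \<noteq> 0 \<and> (card V + 1) mod k \<noteq> 0" using hyp closedF Sr by auto
      have "n \<ge> 1" using nS sS True by simp
      hence cc: "(n-1) mod k = 0 \<or> (n-1) mod k + 3 \<le> k" using arA1[OF k] c unfolding n_def by blast
      have "outd V E {r} r \<le> card {u\<in>V. E r u}" unfolding outd_def using fin by (intro card_mono) auto
      hence "outd V E {r} r \<le> 2" using assms(5) unfolding degree_def by simp
      moreover have "r \<in> V" using rS SV by blast
      ultimately have "safe V E L k {r}"
        by (intro SB_single2[OF fin symE irr Lk k]) (use cc in \<open>auto simp: n_def\<close>)
      thus ?thesis using Sr by simp
    next
      case s1: False
      have "s \<noteq> 0" using vs(3) s_def by simp
      hence s2: "2 \<le> s" using s1 by linarith
      show ?thesis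
      proof (cases "s \<le> k")
        case True
        have c: "s = k \<or> (n - s) mod k = 0 \<or> (n - s) mod k + 3 \<le> k \<or> (3 \<le> s \<and> 4 \<le> k)"
        proof (cases "s = 2")
          case True
          hence "n mod k \<noteq> 0 \<and> n mod k \<noteq> 1" using hyp closedF sS unfolding n_def by auto
          thus ?thesis using arA2[OF k] True nS sS by auto
        next
          case False thus ?thesis using True s2 k by auto
        qed
        have "safe (Wb V vs s) E L k (piece vs 0 s)"
          by (rule piece_two_safe[OF fin symE irr Lk k vs(1) svV degv]) (use s2 True c card_Wb[OF fin svV dist, of s] in \<open>auto simp: s_def n_def\<close>)
        thus ?thesis using Wb_full[of V vs] piece_all[of vs] vs(2) s_def by simp
      next
        case False
        hence sk: "k < s" by simp
        define u0 where "u0 = (s - 1) mod k + 1"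
        define q where "q = (s - 1) div k"
        have "(s - 1) mod k < k" using k by simp
        hence u0k: "1 \<le> u0" "u0 \<le> k" unfolding u0_def by auto
        have su: "u0 + q * k = s" unfolding u0_def q_def using s2 by (metis add.commute add.left_commute le_add_diff_inverse2 mod_div_mult_eq one_le_numeral order_trans)
        have cWb: "\<And>b. b \<le> s \<Longrightarrow> card (Wb V vs b) = n - (s - b)" using card_Wb[OF fin svV dist] unfolding s_def n_def by simp
        show ?thesis
        proof (cases "u0 = 1 \<and> (n - s) mod k = k - 1")
          case False
          have "safe (Wb V vs u0) E L k (piece vs 0 u0)"
          proof (rule piece_one_safe[OF fin symE irr Lk k vs(1) svV degv])
            show "2 \<le> length vs" using s2 s_def by simp
            show "0 < u0" "u0 < length vs" "u0 - 0 \<le> k" using u0k sk s_def by auto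
            have "card (Wb V vs u0) - (u0 - 0) = n - s" using cWb[of u0] u0k sk nS sS by simp
            thus "2 \<le> u0 - 0 \<or> (card (Wb V vs u0) - (u0 - 0)) mod k \<noteq> k - 1" using False u0k by auto
          qed
          thus ?thesis using blocks[OF fin symE irr Lk k vs(1) svV degv, of u0 q] s2 su s_def vs(2) by simp
        next
          case True
          have s5: "s \<ge> 5"
          proof (rule ccontr)
            assume "\<not> s \<ge> 5"
            hence "s = 4 \<and> k = 3 \<and> n mod 3 \<noteq> 0" using hyp closedF sS sk s2 k unfolding n_def by auto
            moreover have sm: "(s - 1) mod k = 0" using True unfolding u0_def by simp
            have "n mod k = 0" by (rule arA4[OF _ _ _ sm]) (use k nS sS True s2 in auto)
            thus False using \<open>s = 4 \<and> k = 3 \<and> n mod 3 \<noteq> 0\<close> by simp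
          qed
          have q1: "1 \<le> q" using su True sk k by (cases q) auto
          have P1: "safe (Wb V vs 2) E L k (piece vs 0 2)"
            by (rule piece_one_safe[OF fin symE irr Lk k vs(1) svV degv]) (use s2 s5 k s_def in auto)
          have mQ: "(card (Wb V vs (k+1)) - (k + 1 - 2)) mod k = 1"
          proof -
            have "card (Wb V vs (k+1)) - (k + 1 - 2) = (n - s) + 2" using cWb[of "k+1"] sk nS sS k by simp
            thus ?thesis using arA3[OF k] True by simp
          qed
          have P2: "safe (Wb V vs (k+1)) E L k (piece vs 2 (k+1))"
          proof (cases "k = 3")
            case True
            show ?thesis
              by (rule piece_one_safe[OF fin symE irr Lk k vs(1) svV degv]) (use s2 s5 True s_def in auto)
          next
            case False
            show ?thesis
              by (rule piece_two_safe[OF fin symE irr Lk k vs(1) svV degv]) (use s2 sk False k mQ s_def in auto)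
          qed
          have "Wb V vs (k+1) - piece vs 2 (k+1) = Wb V vs 2" by (rule Wb_diff) (use k sk s_def in auto)
          hence "safe (Wb V vs (k+1) - piece vs 2 (k+1)) E L k (piece vs 0 2)" using P1 by simp
          hence "safe (Wb V vs (k+1)) E L k (piece vs 0 2 \<union> piece vs 2 (k+1))" using safe_comp P2 by blast
          moreover have "piece vs 0 2 \<union> piece vs 2 (k+1) = piece vs 0 (k+1)" by (rule piece_union) (use k in auto)
          ultimately have P3: "safe (Wb V vs (k+1)) E L k (piece vs 0 (k+1))" by simp
          have "(k+1) + (q - 1) * k = s" using su True q1 by (simp add: algebra_simps)
          thus ?thesis using blocks[OF fin symE irr Lk k vs(1) svV degv, of "k+1" "q-1"] P3 s2 s_def vs(2) by simp
        qed
      qed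
    qed
  qed
qed

end
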